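(* For every integer $d\ge 2$ and every integer $k$ with $d-1\le k\le\binom{d}{2}$, there exists a chopped vertical strip with $d$ vertices (hence $d-2$ cuts) having exactly $k$ short geodesics.
   Context: A chopped vertical strip with $d$ vertices consists of complex numbers $z_j=x_j+\sqrt{-1}\,y_j$, $j=1,\dots,d$, with pairwise distinct real parts and pairwise distinct imaginary parts, ordered so that $x_1<x_2<\dots<x_d$, together with, for each $j=2,\dots,d-1$, a choice of a vertical ray (cut) starting at $z_j$, either $\{x_j+\sqrt{-1}\,s: s\ge y_j\}$ or $\{x_j+\sqrt{-1}\,s: s\le y_j\}$. A short geodesic of the chopped strip is a straight segment $[z_i,z_j]$, $i\neq j$, that does not intersect any cut except possibly at its own endpoints. *)

theory Defs
  imports "HOL-Analysis.Analysis"
begin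

text \<open>A chopped vertical strip with d vertices: vertices z 1, ..., z d (complex numbers)
with pairwise distinct real parts and pairwise distinct imaginary parts, ordered by
increasing real part; for each j in 2..d-1 a cut direction up j (True: upward ray,
False: downward ray).  Values of z and up outside the relevant index range are irrelevant.\<close>

definition chopped_strip :: "nat \<Rightarrow> (nat \<Rightarrow> complex) \<Rightarrow> (nat \<Rightarrow> bool) \<Rightarrow> bool" where
  "chopped_strip d z up \<longleftrightarrow>
     (\<forall>i\<in>{1..d}. \<forall>j\<in>{1..d}. i \<noteq> j \<longrightarrow> Re (z i) \<noteq> Re (z j) \<and> Im (z i) \<noteq> Im (z j)) \<and>
     (\<forall>i\<in>{1..d}. \<forall>j\<in>{1..d}. i < j \<longrightarrow> Re (z i) < Re (z j))"

definition cut :: "(nat \<Rightarrow> complex) \<Rightarrow> (nat \<Rightarrow> bool) \<Rightarrow> nat \<Rightarrow> complex set" where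
  "cut z up j = {Complex (Re (z j)) s | s. if up j then Im (z j) \<le> s else s \<le> Im (z j)}"

definition short_geodesic :: "nat \<Rightarrow> (nat \<Rightarrow> complex) \<Rightarrow> (nat \<Rightarrow> bool) \<Rightarrow> nat \<Rightarrow> nat \<Rightarrow> bool" where
  "short_geodesic d z up i j \<longleftrightarrow>
     i \<in> {1..d} \<and> j \<in> {1..d} \<and> i \<noteq> j \<and>
     (\<forall>m\<in>{2..d-1}. closed_segment (z i) (z j) \<inter> cut z up m \<subseteq> {z i, z j})"

definition num_short_geodesics :: "nat \<Rightarrow> (nat \<Rightarrow> complex) \<Rightarrow> (nat \<Rightarrow> bool) \<Rightarrow> nat" where
  "num_short_geodesics d z up = card {{i, j} | i j. short_geodesic d z up i j}"

end

theory Submission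
  imports Defs
begin

definition chord :: "complex \<Rightarrow> complex \<Rightarrow> real \<Rightarrow> real" where
  "chord a b x = Im a + (Im b - Im a) * (x - Re a) / (Re b - Re a)"

lemma seg_Im:
  assumes "w \<in> closed_segment a b" "Re a < Re b"
  shows "Im w = chord a b (Re w)" "Re a \<le> Re w" "Re w \<le> Re b"
proof -
  obtain u where u: "0\<le>u" "u\<le>1" "w = (1-u) *\<^sub>R a + u *\<^sub>R b"
    using assms(1) unfolding closed_segment_def by auto
  have "Re w = Re ((1-u) *\<^sub>R a + u *\<^sub>R b)" "Im w = Im ((1-u) *\<^sub>R a + u *\<^sub>R b)" using u(3) by simp_all
  then have re: "Re w = Re a + u*(Re b - Re a)" and im: "Im w = Im a + u*(Im b - Im a)" by (simp_all add: algebra_simps)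
  have "u = (Re w - Re a)/(Re b - Re a)" using re assms(2) by (simp add: field_simps)
  then show "Im w = chord a b (Re w)" using im by (simp add: chord_def)
  have "0 \<le> u*(Re b - Re a)" using u assms(2) by simp
  then show "Re a \<le> Re w" using re by simp
  have "u*(Re b - Re a) \<le> 1*(Re b - Re a)" using u assms(2) by (intro mult_right_mono) auto
  then show "Re w \<le> Re b" using re by simp
qed

lemma seg_point:
  assumes "Re a < x" "x < Re b"
  shows "Complex x (chord a b x) \<in> closed_segment a b"
proof -
  define u where "u = (x - Re a)/(Re b - Re a)"
  have u: "0 \<le> u" "u \<le> 1" using assms by (auto simp: u_def field_simps)
  have D: "Re b - Re a \<noteq> 0" using assms by simp
  have e1: "u * (Re b - Re a) = x - Re a" using D by (simp add: u_def)
  have e2: "chord a b x = Im a + u * (Im b - Im a)" by (simp add: u_def chord_def)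
  have "Complex x (chord a b x) = (1-u) *\<^sub>R a + u *\<^sub>R b"
  proof (rule complex_eqI)
    show "Re (Complex x (chord a b x)) = Re ((1-u) *\<^sub>R a + u *\<^sub>R b)"
      using e1 by (simp add: algebra_simps)
    show "Im (Complex x (chord a b x)) = Im ((1-u) *\<^sub>R a + u *\<^sub>R b)"
      using e2 by (simp add: algebra_simps)
  qed
  then show ?thesis using u unfolding closed_segment_def by blast
qed

lemma cut_mem: "w \<in> cut z up m \<longleftrightarrow> Re w = Re (z m) \<and> (if up m then Im (z m) \<le> Im w else Im w \<le> Im (z m))"
proof
  assume "w \<in> cut z up m"
  then show "Re w = Re (z m) \<and> (if up m then Im (z m) \<le> Im w else Im w \<le> Im (z m))"
    unfolding cut_def by auto
next
  assume h: "Re w = Re (z m) \<and> (if up m then Im (z m) \<le> Im w else Im w \<le> Im (z m))"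
  have "w = Complex (Re (z m)) (Im w)" using h by (simp add: complex_eq_iff)
  then show "w \<in> cut z up m" using h unfolding cut_def by blast
qed

lemma short_sym: "short_geodesic d z up i j = short_geodesic d z up j i"
  unfolding short_geodesic_def by (auto simp: closed_segment_commute insert_commute)

lemma short_char:
  assumes inc: "\<forall>i\<in>{1..d}. \<forall>j\<in>{1..d}. i<j \<longrightarrow> Re (z i) < Re (z j)"
    and ij: "1 \<le> i" "i < j" "j \<le> d"
  shows "short_geodesic d z up i j \<longleftrightarrow> (\<forall>m. i<m \<and> m<j \<longrightarrow>
     (if up m then chord (z i) (z j) (Re (z m)) < Im (z m) else Im (z m) < chord (z i) (z j) (Re (z m))))"
proof
  assume sh: "short_geodesic d z up i j"
  show "\<forall>m. i<m \<and> m<j \<longrightarrow>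
     (if up m then chord (z i) (z j) (Re (z m)) < Im (z m) else Im (z m) < chord (z i) (z j) (Re (z m)))"
  proof (intro allI impI)
    fix m assume m: "i<m \<and> m<j"
    define w where "w = Complex (Re (z m)) (chord (z i) (z j) (Re (z m)))"
    have r1: "Re (z i) < Re (z m)" "Re (z m) < Re (z j)" using inc m ij by auto
    have ws: "w \<in> closed_segment (z i) (z j)" unfolding w_def using r1 by (rule seg_point)
    have "Re w \<noteq> Re (z i)" "Re w \<noteq> Re (z j)" using r1 unfolding w_def by auto
    then have "w \<noteq> z i" "w \<noteq> z j" by auto
    moreover have "m \<in> {2..d-1}" using m ij by auto
    ultimately have "w \<notin> cut z up m" using sh ws unfolding short_geodesic_def by blast
    then show "if up m then chord (z i) (z j) (Re (z m)) < Im (z m) else Im (z m) < chord (z i) (z j) (Re (z m))"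
      unfolding cut_mem w_def by auto
  qed
next
  assume c: "\<forall>m. i<m \<and> m<j \<longrightarrow>
     (if up m then chord (z i) (z j) (Re (z m)) < Im (z m) else Im (z m) < chord (z i) (z j) (Re (z m)))"
  have rij: "Re (z i) < Re (z j)" using inc ij by auto
  show "short_geodesic d z up i j" unfolding short_geodesic_def
  proof (intro conjI ballI subsetI)
    show "i \<in> {1..d}" "j \<in> {1..d}" "i \<noteq> j" using ij by auto
  next
    fix m w assume m: "m \<in> {2..d-1}" and w: "w \<in> closed_segment (z i) (z j) \<inter> cut z up m"
    have wi: "Im w = chord (z i) (z j) (Re w)" "Re (z i) \<le> Re w" "Re w \<le> Re (z j)"
      using seg_Im[of w "z i" "z j"] w rij by auto
    have wc: "Re w = Re (z m)" "(if up m then Im (z m) \<le> Im w else Im w \<le> Im (z m))"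
      using w cut_mem by blast+
    consider "m < i" | "m = i" | "i < m \<and> m < j" | "m = j" | "j < m" by linarith
    then show "w \<in> {z i, z j}"
    proof cases
      case 1 then have "Re (z m) < Re (z i)" using inc m ij by auto
      then show ?thesis using wc wi by auto
    next
      case 2
      then have "Im w = Im (z i)" using wi wc by (simp add: chord_def)
      then have "w = z i" using wc 2 by (simp add: complex_eq_iff)
      then show ?thesis by simp
    next
      case 3
      then show ?thesis using c wc wi by (auto split: if_splits)
    next
      case 4
      then have "Im w = Im (z j)" using wi wc rij by (simp add: chord_def)
      then have "w = z j" using wc 4 by (simp add: complex_eq_iff)
      then show ?thesis by simp
    next
      case 5 then have "Re (z j) < Re (z m)" using inc m ij by auto
      then show ?thesis using wc wi by auto
    qed
  qed
qed

lemma count_sum: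
  shows "num_short_geodesics d z up = (\<Sum>j\<in>{1..d}. card {i. i<j \<and> short_geodesic d z up i j})"
proof -
  let ?S = "SIGMA j:{1..d}. {i. i<j \<and> short_geodesic d z up i j}"
  have eq: "{{i, j} | i j. short_geodesic d z up i j} = (\<lambda>(j,i). {i,j}) ` ?S"
  proof (rule set_eqI, rule iffI)
    fix x assume "x \<in> {{i, j} | i j. short_geodesic d z up i j}"
    then obtain i j where x: "x = {i,j}" and s: "short_geodesic d z up i j" by blast
    have ij: "i \<in> {1..d}" "j \<in> {1..d}" "i \<noteq> j" using s unfolding short_geodesic_def by auto
    show "x \<in> (\<lambda>(j,i). {i,j}) ` ?S"
    proof (cases "i < j")
      case True
      then have "(j,i) \<in> ?S" using s ij by auto
      then show ?thesis using x by force
    next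
      case False
      then have "(i,j) \<in> ?S" using s ij short_sym[of d z up i j] by auto
      then show ?thesis using x by (force simp: insert_commute)
    qed
  next
    fix x assume "x \<in> (\<lambda>(j,i). {i,j}) ` ?S"
    then show "x \<in> {{i, j} | i j. short_geodesic d z up i j}" by auto
  qed
  have inj: "inj_on (\<lambda>(j,i). {i,j}) ?S"
    by (auto simp: inj_on_def doubleton_eq_iff)
  have fin: "finite ?S" by (rule finite_SigmaI) auto
  have "num_short_geodesics d z up = card ?S"
    unfolding num_short_geodesics_def eq using card_image[OF inj] by simp
  also have "\<dots> = (\<Sum>j\<in>{1..d}. card {i. i<j \<and> short_geodesic d z up i j})"
    by (rule card_SigmaI) auto
  finally show ?thesis .
qed


lemma para:
  fixes i m j :: real assumes "i < m" "m < j"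
  shows "m^2 < i^2 + (j^2 - i^2)*(m-i)/(j-i)"
proof -
  have "(j^2 - i^2)*(m-i)/(j-i) = (j+i)*(m-i)" using assms
    by (simp add: field_simps power2_eq_square)
  moreover have "0 < (m-i)*(j-m)" using assms by simp
  ultimately show ?thesis by (simp add: algebra_simps power2_eq_square)
qed

lemma hgood:
  fixes i m n h :: real assumes "i < m" "m \<le> n" "n^2+n+i < h"
  shows "m^2 < i^2 + (h-i^2)*(m-i)/(n+1-i)"
proof -
  have D: "0 < n+1-i" using assms by simp
  have "(m+i)*(n+1-i) \<le> (n+i)*(n+1-i)" using D assms by (intro mult_right_mono) auto
  also have "\<dots> = n^2+n+i - i^2" by (simp add: algebra_simps power2_eq_square)
  finally have "(m+i)*(n+1-i) < h - i^2" using assms by simp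
  then have "(m+i)*(n+1-i)*(m-i) < (h - i^2)*(m-i)" using assms by (intro mult_strict_right_mono) auto
  then have "(m+i)*(m-i) < (h - i^2)*(m-i)/(n+1-i)" using D by (simp add: field_simps)
  then show ?thesis by (simp add: algebra_simps power2_eq_square)
qed

lemma hbad:
  fixes i n h :: real assumes "i < n" "h < n^2+n+i"
  shows "\<not> (n^2 < i^2 + (h-i^2)*(n-i)/(n+1-i))"
proof -
  have D: "0 < n+1-i" using assms by simp
  have "(n+i)*(n+1-i) = n^2+n+i - i^2" by (simp add: algebra_simps power2_eq_square)
  then have "h - i^2 < (n+i)*(n+1-i)" using assms by simp
  then have "(h - i^2)*(n-i) < (n+i)*(n+1-i)*(n-i)" using assms by (intro mult_strict_right_mono) auto
  then have "(h - i^2)*(n-i)/(n+1-i) < (n+i)*(n-i)" using D by (simp add: field_simps)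
  then show ?thesis by (simp add: algebra_simps power2_eq_square)
qed

lemma far:
  fixes a b c i j :: real assumes "0 \<le> a" "a \<le> b" "2*c \<le> b" "i+2 \<le> j"
  shows "c \<le> a + (b-a)*(j-1-i)/(j-i)"
proof -
  have D: "0 < j - i" using assms by simp
  have "(b-a)*(1/2) \<le> (b-a)*((j-1-i)/(j-i))" using assms D
    by (intro mult_left_mono) (auto simp: field_simps)
  then have "a + (b-a)/2 \<le> a + (b-a)*(j-1-i)/(j-i)" by simp
  moreover have "c \<le> a + (b-a)/2" using assms by (simp add: field_simps)
  ultimately show ?thesis by linarith
qed

lemma choose2_Suc: "(Suc n choose 2) = (n choose 2) + n"
  using binomial_Suc_Suc[of n 1] by (simp add: numeral_2_eq_2)

lemma sum_pred: "(\<Sum>j\<in>{1..n}. j - 1) = (n choose 2 :: nat)"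
proof (induction n)
  case 0 then show ?case by simp
next
  case (Suc n)
  have "(Suc n choose 2) = (n choose 2) + n" by (rule choose2_Suc)
  then show ?case using Suc by simp
qed

lemma sel_aux:
  assumes "2 \<le> m" shows "m \<le> d \<Longrightarrow> d - 1 \<le> k \<Longrightarrow> k \<le> (m choose 2) + (d - m) \<Longrightarrow>
    \<exists>n t. 1 \<le> n \<and> n < m \<and> t < n \<and> k = (n choose 2) + (t+1) + (d-(n+1))"
  using assms
proof (induction m rule: nat_induct_at_least)
  case base
  then have "k = d - 1" by (simp add: numeral_2_eq_2)
  have z: "((1::nat) choose 2) = 0" by (simp add: binomial_eq_0)
  have "k = 0 + (0+1) + (d-(1+1))" using base \<open>k = d - 1\<close> by simp
  then have "k = ((1::nat) choose 2) + (0+1) + (d-(1+1))" by (subst z)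
  then show ?case by (intro exI[of _ "1::nat"] exI[of _ "0::nat"]) simp
next
  case (Suc m)
  have c: "(Suc m choose 2) = (m choose 2) + m" by (rule choose2_Suc)
  show ?case
  proof (cases "k \<le> (m choose 2) + (d - m)")
    case True
    then obtain n t where "1 \<le> n \<and> n < m \<and> t < n \<and> k = (n choose 2) + (t+1) + (d-(n+1))"
      using Suc.IH Suc.prems by auto
    then show ?thesis by (intro exI[of _ n] exI[of _ t]) auto
  next
    case False
    define t where "t = k - (m choose 2) - (d - m)"
    have "1 \<le> m" "m < Suc m" using Suc by auto
    moreover have "t < m" using False Suc.prems c unfolding t_def by linarith
    moreover have "k = (m choose 2) + (t+1) + (d-(m+1))" using False Suc.prems c unfolding t_def by linarith
    ultimately show ?thesis by blast
  qed
qed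


lemma construct:
  assumes n1: "1 \<le> n" and nd: "n < d" and tn: "t < n"
  shows "\<exists>z up. chopped_strip d z up \<and> num_short_geodesics d z up = (n choose 2) + (t+1) + (d-(n+1))"
proof -
  define h :: real where "h = real n ^ 2 + real n + real t + 1/2"
  define y :: "nat \<Rightarrow> real" where "y j = (if j \<le> n then (real j)^2 else if j = n+1 then h
      else (real n + 1)^2 * 4^(j-n))" for j
  define z where "z j = Complex (real j) (y j)" for j
  define up where "up m = (n+1 \<le> m)" for m :: nat
  have ystep: "y j < y (Suc j)" for j
  proof -
    consider "Suc j \<le> n" | "j = n" | "j = n+1" | "n+2 \<le> j" by linarith
    then show ?thesis
    proof cases
      case 1
      have "real j ^2 < real (Suc j) ^2" by (rule power_strict_mono) auto
      then show ?thesis using 1 by (simp add: y_def)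
    next
      case 2 then show ?thesis by (simp add: y_def h_def)
    next
      case 3
      have a: "real t < real n" "0 \<le> real n * real n" using tn by auto
      have "h < (real n + 1)^2 * 4^2" unfolding h_def power2_eq_square by (simp add: algebra_simps) (use a in linarith)
      moreover have "Suc j - n = 2" using 3 by simp
      ultimately show ?thesis using 3 by (simp add: y_def)
    next
      case 4
      then have e: "Suc j - n = Suc (j - n)" by simp
      have "(real n + 1)^2 * 4^(j-n) < (real n + 1)^2 * 4^(Suc (j-n))" by simp
      then show ?thesis using 4 e by (simp add: y_def)
    qed
  qed
  have ymono: "i < j \<Longrightarrow> y i < y j" for i j
    using lift_Suc_mono_less[of y, OF ystep] by blast
  have ypos: "0 \<le> y j" for j unfolding y_def h_def by auto
  have y2: "2 * y (j-1) \<le> y j" if "n+2 \<le> j" for j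
  proof (cases "j = n+2")
    case True
    have a: "real t < real n" "0 \<le> real n * real n" using tn by auto
    have "h \<le> (real n + 1)^2 * 8" unfolding h_def power2_eq_square by (simp add: algebra_simps) (use a in linarith)
    then show ?thesis using True by (simp add: y_def)
  next
    case False
    then have e: "j - n = Suc (j - 1 - n)" and "\<not> j - 1 \<le> n" "j - 1 \<noteq> n + 1" "\<not> j \<le> n" "j \<noteq> n+1"
      using that by auto
    then show ?thesis by (simp add: y_def e)
  qed
  have zre: "Re (z m) = real m" and zim: "Im (z m) = y m" for m by (simp_all add: z_def)
  have inc: "\<forall>i\<in>{1..d}. \<forall>j\<in>{1..d}. i<j \<longrightarrow> Re (z i) < Re (z j)" by (simp add: z_def)
  have strip: "chopped_strip d z up"
    unfolding chopped_strip_def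
  proof (intro conjI ballI impI)
    fix i j assume "i \<in> {1..d}" "j \<in> {1..d}" "i \<noteq> j"
    then have "i < j \<or> j < i" by auto
    then have "y i \<noteq> y j" using ymono by (metis less_irrefl)
    then show "Re (z i) \<noteq> Re (z j)" "Im (z i) \<noteq> Im (z j)" using \<open>i \<noteq> j\<close> by (auto simp: z_def)
  next
    fix i j assume "i \<in> {1..d}" "j \<in> {1..d}" "i < j"
    then show "Re (z i) < Re (z j)" by (simp add: z_def)
  qed
  have key: "short_geodesic d z up i j \<longleftrightarrow> (\<forall>m. i<m \<and> m<j \<longrightarrow>
     (if up m then chord (z i) (z j) (real m) < y m else y m < chord (z i) (z j) (real m)))"
    if "1 \<le> i" "i < j" "j \<le> d" for i j
    using short_char[OF inc that, of up] by (simp add: zre zim)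
  have chordv: "chord (z i) (z j) (real m) = y i + (y j - y i) * (real m - real i) / (real j - real i)" for i j m
    by (simp add: chord_def zre zim)
  define f where "f j = (if j \<le> n then j - 1 else if j = n+1 then t+1 else 1)" for j :: nat
  have cardV: "card {i. i<j \<and> short_geodesic d z up i j} = f j" if j: "j \<in> {1..d}" for j
  proof -
    have V: "{i. i<j \<and> short_geodesic d z up i j} = {i. 1 \<le> i \<and> i < j \<and> short_geodesic d z up i j}"
      unfolding short_geodesic_def by auto
    consider "j \<le> n" | "j = n+1" | "n+2 \<le> j" by linarith
    then show ?thesis
    proof cases
      case 1
      have "{i. 1 \<le> i \<and> i < j \<and> short_geodesic d z up i j} = {1..<j}"
      proof (rule set_eqI, rule iffI)
        fix i assume "i \<in> {1..<j}"
        then have i: "1 \<le> i" "i < j" by auto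
        have "short_geodesic d z up i j"
        proof (subst key)
          show "1 \<le> i" "i < j" "j \<le> d" using i j by auto
          show "\<forall>m. i<m \<and> m<j \<longrightarrow>
            (if up m then chord (z i) (z j) (real m) < y m else y m < chord (z i) (z j) (real m))"
          proof (intro allI impI)
            fix m assume m: "i<m \<and> m<j"
            have "(real m)^2 < (real i)^2 + ((real j)^2 - (real i)^2)*(real m - real i)/(real j - real i)"
              using m by (intro para) auto
            then show "if up m then chord (z i) (z j) (real m) < y m else y m < chord (z i) (z j) (real m)"
              using m i 1 by (simp add: chordv up_def y_def)
          qed
        qed
        then show "i \<in> {i. 1 \<le> i \<and> i < j \<and> short_geodesic d z up i j}" using i by auto
      qed auto
      then show ?thesis using V 1 by (simp add: f_def)
    next
      case 2
      have hy: "y (n+1) = h" by (simp add: y_def)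
      have "{i. 1 \<le> i \<and> i < j \<and> short_geodesic d z up i j} = insert n {1..t}"
      proof (rule set_eqI, rule iffI)
        fix i assume "i \<in> {i. 1 \<le> i \<and> i < j \<and> short_geodesic d z up i j}"
        then have i: "1 \<le> i" "i < n+1" and s: "short_geodesic d z up i (n+1)" using 2 by auto
        show "i \<in> insert n {1..t}"
        proof (rule ccontr)
          assume "i \<notin> insert n {1..t}"
          then have it: "t < i" "i < n" using i by auto
          have "\<forall>m. i<m \<and> m<n+1 \<longrightarrow>
            (if up m then chord (z i) (z (n+1)) (real m) < y m else y m < chord (z i) (z (n+1)) (real m))"
            using s key[of i "n+1"] i nd by auto
          then have "y n < chord (z i) (z (n+1)) (real n)" using it by (auto simp: up_def)
          then have c: "(real n)^2 < (real i)^2 + (h - (real i)^2)*(real n - real i)/(real n + 1 - real i)"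
            using it by (simp add: chordv hy y_def add.commute)
          have "h < (real n)^2 + real n + real i" using it unfolding h_def by simp
          then show False using hbad[of "real i" "real n" h] c it by simp
        qed
      next
        fix i assume "i \<in> insert n {1..t}"
        then have i: "1 \<le> i" "i \<le> n" "i = n \<or> i \<le> t" using tn n1 by auto
        have "short_geodesic d z up i (n+1)"
        proof (subst key)
          show "1 \<le> i" "i < n+1" "n+1 \<le> d" using i nd by auto
          show "\<forall>m. i<m \<and> m<n+1 \<longrightarrow>
            (if up m then chord (z i) (z (n+1)) (real m) < y m else y m < chord (z i) (z (n+1)) (real m))"
          proof (intro allI impI)
            fix m assume m: "i<m \<and> m<n+1"
            then have it: "i \<le> t" using i by auto
            have "(real n)^2 + real n + real i < h" using it unfolding h_def by simp
            then have "(real m)^2 < (real i)^2 + (h - (real i)^2)*(real m - real i)/(real n + 1 - real i)"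
              using m by (intro hgood) auto
            then show "if up m then chord (z i) (z (n+1)) (real m) < y m else y m < chord (z i) (z (n+1)) (real m)"
              using m i by (simp add: chordv hy up_def y_def add.commute)
          qed
        qed
        then show "i \<in> {i. 1 \<le> i \<and> i < j \<and> short_geodesic d z up i j}" using i 2 by auto
      qed
      moreover have "card (insert n {1..t}) = t+1" using tn by simp
      ultimately show ?thesis using V 2 by (simp add: f_def)
    next
      case 3
      have "{i. 1 \<le> i \<and> i < j \<and> short_geodesic d z up i j} = {j-1}"
      proof (rule set_eqI, rule iffI)
        fix i assume "i \<in> {i. 1 \<le> i \<and> i < j \<and> short_geodesic d z up i j}"
        then have i: "1 \<le> i" "i < j" and s: "short_geodesic d z up i j" by auto
        show "i \<in> {j-1}"
        proof (rule ccontr)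
          assume "i \<notin> {j-1}"
          then have it: "i + 2 \<le> j" using i by auto
          have all: "\<forall>m. i<m \<and> m<j \<longrightarrow>
            (if up m then chord (z i) (z j) (real m) < y m else y m < chord (z i) (z j) (real m))"
            using s key[of i j] i j by auto
          have m1: "i < j-1 \<and> j-1 < j" using it by auto
          have "if up (j-1) then chord (z i) (z j) (real (j-1)) < y (j-1) else y (j-1) < chord (z i) (z j) (real (j-1))"
            using all m1 by blast
          moreover have "up (j-1)" using 3 by (simp add: up_def)
          ultimately have "chord (z i) (z j) (real (j-1)) < y (j-1)" by simp
          moreover have "real (j-1) = real j - 1" using 3 by simp
          ultimately have c: "y i + (y j - y i) * (real j - 1 - real i) / (real j - real i) < y (j-1)"
            using chordv[of i j "j-1"] by simp
          have "y i \<le> y j" using ymono[of i j] i by simp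
          moreover have "real i + 2 \<le> real j" using it by simp
          ultimately have "y (j-1) \<le> y i + (y j - y i) * (real j - 1 - real i) / (real j - real i)"
            using far[of "y i" "y j" "y (j-1)" "real i" "real j"] ypos y2[OF 3] by simp
          then show False using c by simp
        qed
      next
        fix i assume "i \<in> {j-1}"
        then have i: "i = j - 1" by simp
        have "short_geodesic d z up i j"
          using key[of i j] i 3 j n1 by auto
        then show "i \<in> {i. 1 \<le> i \<and> i < j \<and> short_geodesic d z up i j}" using i 3 n1 by auto
      qed
      then show ?thesis using V 3 by (simp add: f_def)
    qed
  qed
  have "num_short_geodesics d z up = (\<Sum>j\<in>{1..d}. f j)"
    using count_sum[of d z up] cardV by simp
  also have "\<dots> = (\<Sum>j\<in>{1..n}. f j) + f (n+1) + (\<Sum>j\<in>{n+2..d}. f j)"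
  proof -
    have "{1..d} = {1..n} \<union> insert (n+1) {n+2..d}" using nd n1 by auto
    moreover have "{1..n} \<inter> insert (n+1) {n+2..d} = {}" by auto
    ultimately show ?thesis by (simp add: sum.union_disjoint add.assoc)
  qed
  also have "\<dots> = (n choose 2) + (t+1) + (d-(n+1))"
  proof -
    have "(\<Sum>j\<in>{1..n}. f j) = (\<Sum>j\<in>{1..n}. j - 1)" by (rule sum.cong) (auto simp: f_def)
    also have "\<dots> = (n choose 2)" by (rule sum_pred)
    finally have a: "(\<Sum>j\<in>{1..n}. f j) = (n choose 2)" .
    have "(\<Sum>j\<in>{n+2..d}. f j) = (\<Sum>j\<in>{n+2..d}. 1)" by (rule sum.cong) (auto simp: f_def)
    also have "\<dots> = d - (n+1)" by simp
    finally show ?thesis using a by (simp add: f_def)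
  qed
  finally show ?thesis using strip by blast
qed

theorem mainTheorem5:
  fixes d k :: nat
  assumes "d \<ge> 2" and "d - 1 \<le> k" and "k \<le> d choose 2"
  shows "\<exists>z up. chopped_strip d z up \<and> num_short_geodesics d z up = k"
proof -
  have "k \<le> (d choose 2) + (d - d)" using assms by simp
  then obtain n t where nt: "1 \<le> n" "n < d" "t < n" "k = (n choose 2) + (t+1) + (d-(n+1))"
    using sel_aux[of d d k] assms by blast
  show ?thesis using construct[OF nt(1-3)] nt(4) by simp
qed

end
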